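(* For $0\le t_1\le t_2\le\infty$ and $z>0$ let $V_{[t_1,t_2],z}=\{(x,y)\in[0,\infty]\times(0,\infty]: x\in[t_1,t_2],\ y>z\}$. Let $\{(Z_{1t},Z_{2t})\}_{t>0}$ be a family of pairs of nonnegative random variables and $\nu$ a Radon measure on $[0,\infty]\times(0,\infty]$ such that: (A) whenever $\nu(\partial V_{[t_1,t_2],z})=0$, we have $t\,\mathbb P[(Z_{1t},Z_{2t})\in V_{[t_1,t_2],z}]\to\nu(V_{[t_1,t_2],z})$ as $t\to\infty$; (B) for every $z_0\in(0,\infty)$, $t\,\mathbb P[(Z_{1t},Z_{2t})\in V_{[0,\infty],z_0}]\to f(z_0)\in(0,\infty)$ as $t\to\infty$. Then $t\,\mathbb P[(Z_{1t},Z_{2t})\in\cdot]\xrightarrow{\mathrm v}\nu(\cdot)$ in $M_+([0,\infty]\times(0,\infty])$ as $t\to\infty$.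
   Context: Vague convergence $\mu_t\xrightarrow{\mathrm v}\mu$ in $M_+(\mathsf S)$ (the space of nonnegative Radon measures on $\mathsf S$) means $\mu_t(C)\to\mu(C)$ for every relatively compact $C\subset\mathsf S$ with $\mu(\partial C)=0$. *)

theory Defs
  imports "HOL-Probability.Probability"
begin

definition Sset :: "(ereal \<times> ereal) set" where
  "Sset = {0..\<infinity>} \<times> {0<..\<infinity>}"

definition STop :: "(ereal \<times> ereal) topology" where
  "STop = subtopology euclidean Sset"

definition Vset :: "ereal \<Rightarrow> ereal \<Rightarrow> real \<Rightarrow> (ereal \<times> ereal) set" where
  "Vset t1 t2 z = {(x, y) \<in> Sset. t1 \<le> x \<and> x \<le> t2 \<and> ereal z < y}"

definition radon_on_S :: "(ereal \<times> ereal) measure \<Rightarrow> bool" where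
  "radon_on_S \<nu> \<longleftrightarrow> sets \<nu> = sets (restrict_space borel Sset) \<and>
     (\<forall>K. compactin STop K \<longrightarrow> emeasure \<nu> K < \<infinity>)"

definition vague_tendsto ::
  "(real \<Rightarrow> (ereal \<times> ereal) set \<Rightarrow> ennreal) \<Rightarrow> (ereal \<times> ereal) measure \<Rightarrow> bool" where
  "vague_tendsto \<mu> \<nu> \<longleftrightarrow>
     (\<forall>C. C \<subseteq> Sset \<and> C \<in> sets \<nu> \<and> compactin STop (STop closure_of C) \<and>
          emeasure \<nu> (STop frontier_of C) = 0 \<longrightarrow>
          ((\<lambda>t. \<mu> t C) \<longlongrightarrow> emeasure \<nu> C) at_top)"

end

theory Submission
  imports Defs
begin


lemma Sset_borel: "Sset \<in> sets borel"
proof -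
  have "{0..\<infinity>::ereal} \<times> {0<..\<infinity>::ereal} \<in> sets (borel \<Otimes>\<^sub>M borel)"
  proof (intro pair_measureI)
    have "{0<..\<infinity>::ereal} = {0<..}" by auto
    then show "{0<..\<infinity>::ereal} \<in> sets borel" by simp
  qed simp
  from this[unfolded borel_prod] show ?thesis unfolding Sset_def .
qed

locale L53 = prob_space M for M :: "'a measure" +
  fixes Z1 Z2 :: "real \<Rightarrow> 'a \<Rightarrow> real" and \<nu> :: "(ereal \<times> ereal) measure"
  assumes m1: "\<And>t. t > 0 \<Longrightarrow> Z1 t \<in> borel_measurable M"
    and m2: "\<And>t. t > 0 \<Longrightarrow> Z2 t \<in> borel_measurable M"
    and rad: "radon_on_S \<nu>"
    and A: "\<And>t1 t2 z. 0 \<le> t1 \<Longrightarrow> t1 \<le> t2 \<Longrightarrow> z > 0 \<Longrightarrow>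
            emeasure \<nu> (STop frontier_of (Vset t1 t2 z)) = 0 \<Longrightarrow>
            ((\<lambda>t. ennreal (t * measure M {\<omega> \<in> space M.
                 (ereal (Z1 t \<omega>), ereal (Z2 t \<omega>)) \<in> Vset t1 t2 z}))
              \<longlongrightarrow> emeasure \<nu> (Vset t1 t2 z)) at_top"
begin

definition pre where "pre t K = {\<omega> \<in> space M. (ereal (Z1 t \<omega>), ereal (Z2 t \<omega>)) \<in> K}"
definition r where "r t K = t * measure M (pre t K)"

lemma sets_nu: "K \<in> sets \<nu> \<longleftrightarrow> K \<subseteq> Sset \<and> K \<in> sets borel"
  using rad Sset_borel unfolding radon_on_S_def
  by (simp add: sets_restrict_space_iff)

lemma pre_sets: assumes "t > 0" "K \<in> sets borel" shows "pre t K \<in> events"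
proof -
  have "(\<lambda>\<omega>. (ereal (Z1 t \<omega>), ereal (Z2 t \<omega>))) \<in> M \<rightarrow>\<^sub>M (borel \<Otimes>\<^sub>M borel)"
    using m1[OF assms(1)] m2[OF assms(1)] by measurable
  then have "(\<lambda>\<omega>. (ereal (Z1 t \<omega>), ereal (Z2 t \<omega>))) \<in> M \<rightarrow>\<^sub>M borel"
    by (simp add: borel_prod)
  from measurable_sets[OF this assms(2)] show ?thesis
    unfolding pre_def by (simp add: vimage_def Int_def conj_commute)
qed

lemma fin: assumes "K \<in> sets \<nu>" "\<And>q. q \<in> K \<Longrightarrow> ereal c \<le> snd q" "c > 0"
  shows "emeasure \<nu> K < \<infinity>"
proof -
  let ?Kc = "{0..\<infinity>::ereal} \<times> {ereal c..\<infinity>}"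
  have cc: "compact ?Kc" by (intro compact_Times) (auto simp: compact_eq_closed)
  have c0: "0 < ereal c" using assms(3) by simp
  have sub: "?Kc \<subseteq> Sset" unfolding Sset_def by (auto intro: less_le_trans[OF c0])
  have "compactin STop ?Kc" unfolding STop_def using cc sub
    by (simp add: compactin_subtopology)
  then have "emeasure \<nu> ?Kc < \<infinity>" using rad unfolding radon_on_S_def by blast
  moreover have "?Kc \<in> sets \<nu>" unfolding sets_nu using sub cc
    by (simp add: borel_closed compact_imp_closed)
  moreover have "K \<subseteq> ?Kc" using assms(1,2) unfolding sets_nu Sset_def by fastforce
  ultimately show ?thesis by (meson emeasure_mono le_less_trans)
qed

lemma pre_mono: "K \<subseteq> K' \<Longrightarrow> pre t K \<subseteq> pre t K'" unfolding pre_def by auto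

lemma r_nonneg: "t > 0 \<Longrightarrow> r t K \<ge> 0" unfolding r_def by simp

lemma r_mono: "t > 0 \<Longrightarrow> K' \<in> sets borel \<Longrightarrow> K \<subseteq> K' \<Longrightarrow> r t K \<le> r t K'"
  unfolding r_def by (intro mult_left_mono finite_measure_mono pre_mono pre_sets) auto

lemma r_diff: assumes "t > 0" "K \<in> sets borel" "K' \<in> sets borel" "K' \<subseteq> K"
  shows "r t (K - K') = r t K - r t K'"
proof -
  have "pre t (K - K') = pre t K - pre t K'" unfolding pre_def by auto
  then show ?thesis unfolding r_def using assms
    by (simp add: finite_measure_Diff pre_sets pre_mono right_diff_distrib)
qed

lemma r_Un: assumes "t > 0" "K \<in> sets borel" "K' \<in> sets borel" "K \<inter> K' = {}"
  shows "r t (K \<union> K') = r t K + r t K'"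
proof -
  have "pre t (K \<union> K') = pre t K \<union> pre t K'" "pre t K \<inter> pre t K' = {}"
    using assms(4) unfolding pre_def by auto
  then show ?thesis unfolding r_def using assms
    by (simp add: finite_measure_Union pre_sets distrib_left)
qed

definition Kc where "Kc K \<longleftrightarrow> K \<in> sets \<nu> \<and> emeasure \<nu> K < \<infinity> \<and> ((\<lambda>t. r t K) \<longlongrightarrow> measure \<nu> K) at_top"

lemma Kc_empty: "Kc {}"
proof -
  have "r t {} = 0" for t unfolding r_def pre_def by simp
  then show ?thesis unfolding Kc_def by simp
qed

lemma Kc_diff: assumes "Kc K" "Kc K'" "K' \<subseteq> K" shows "Kc (K - K')"
proof -
  have s: "K \<in> sets \<nu>" "K' \<in> sets \<nu>" "emeasure \<nu> K < \<infinity>" using assms unfolding Kc_def by auto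
  have sb: "K \<in> sets borel" "K' \<in> sets borel" using s sets_nu by auto
  have "\<forall>\<^sub>F t in at_top. r t K - r t K' = r t (K - K')"
    using eventually_gt_at_top[of 0] by eventually_elim (simp add: r_diff sb assms(3))
  moreover have "((\<lambda>t. r t K - r t K') \<longlongrightarrow> measure \<nu> K - measure \<nu> K') at_top"
    using assms unfolding Kc_def by (intro tendsto_diff) auto
  ultimately have "((\<lambda>t. r t (K - K')) \<longlongrightarrow> measure \<nu> K - measure \<nu> K') at_top"
    by (rule Lim_transform_eventually[rotated])
  moreover have "measure \<nu> (K - K') = measure \<nu> K - measure \<nu> K'"
    using s assms(3) by (intro measure_Diff) auto
  moreover have "emeasure \<nu> (K - K') < \<infinity>"
    using s by (meson Diff_subset emeasure_mono le_less_trans)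
  ultimately show ?thesis using s unfolding Kc_def by auto
qed

lemma Kc_Un: assumes "Kc K" "Kc K'" "K \<inter> K' = {}" shows "Kc (K \<union> K')"
proof -
  have s: "K \<in> sets \<nu>" "K' \<in> sets \<nu>" "emeasure \<nu> K < \<infinity>" "emeasure \<nu> K' < \<infinity>"
    using assms unfolding Kc_def by auto
  have sb: "K \<in> sets borel" "K' \<in> sets borel" using s sets_nu by auto
  have "\<forall>\<^sub>F t in at_top. r t K + r t K' = r t (K \<union> K')"
    using eventually_gt_at_top[of 0] by eventually_elim (simp add: r_Un sb assms(3))
  moreover have "((\<lambda>t. r t K + r t K') \<longlongrightarrow> measure \<nu> K + measure \<nu> K') at_top"
    using assms unfolding Kc_def by (intro tendsto_add) auto
  ultimately have "((\<lambda>t. r t (K \<union> K')) \<longlongrightarrow> measure \<nu> K + measure \<nu> K') at_top"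
    by (rule Lim_transform_eventually[rotated])
  moreover have "measure \<nu> (K \<union> K') = measure \<nu> K + measure \<nu> K'"
    using s assms(3) by (intro measure_Union) auto
  moreover have "emeasure \<nu> (K \<union> K') < \<infinity>"
    using s assms(3) by (simp add: plus_emeasure[symmetric])
  ultimately show ?thesis using s unfolding Kc_def by auto
qed

lemma Kc_null_sub: assumes "Kc N" "emeasure \<nu> N = 0" "K \<subseteq> N" "K \<in> sets \<nu>" shows "Kc K"
proof -
  have s: "N \<in> sets \<nu>" using assms unfolding Kc_def by auto
  have sb: "N \<in> sets borel" using s sets_nu by auto
  have mN: "measure \<nu> N = 0" using assms(2) by (simp add: measure_def)
  have mK: "emeasure \<nu> K = 0" using assms s by (metis emeasure_mono le_zero_eq)
  then have mK': "measure \<nu> K = 0" by (simp add: measure_def)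
  have "((\<lambda>t. r t K) \<longlongrightarrow> 0) at_top"
  proof (rule tendsto_sandwich[of "\<lambda>_. 0" _ _ "\<lambda>t. r t N"])
    show "\<forall>\<^sub>F t in at_top. 0 \<le> r t K" using eventually_gt_at_top[of 0]
      by eventually_elim (simp add: r_nonneg)
    show "\<forall>\<^sub>F t in at_top. r t K \<le> r t N" using eventually_gt_at_top[of 0]
      by eventually_elim (simp add: r_mono sb assms(3))
    show "((\<lambda>t. r t N) \<longlongrightarrow> 0) at_top" using assms(1) mN unfolding Kc_def by simp
  qed simp
  then show ?thesis using mK mK' assms(4) unfolding Kc_def by simp
qed

lemma Kc_Union: "finite F \<Longrightarrow> (\<And>P. P \<in> F \<Longrightarrow> Kc P) \<Longrightarrow>
   (\<And>P Q. P \<in> F \<Longrightarrow> Q \<in> F \<Longrightarrow> P \<noteq> Q \<Longrightarrow> P \<inter> Q = {}) \<Longrightarrow> Kc (\<Union>F)"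
proof (induction F rule: finite_induct)
  case empty then show ?case by (simp add: Kc_empty)
next
  case (insert P F)
  have "Kc (P \<union> \<Union>F)"
  proof (rule Kc_Un)
    show "P \<inter> \<Union>F = {}" using insert.prems(2) insert.hyps(2) by blast
  qed (use insert in auto)
  then show ?case by simp
qed

lemma V_frontier:
  fixes s t :: ereal and z :: real
  shows "STop frontier_of (Vset s t z) \<subseteq> (Sset \<inter> {q. snd q = ereal z}) \<union>
     (if s = 0 then {} else Sset \<inter> {q. fst q = s \<and> ereal z \<le> snd q}) \<union>
     (if t = \<infinity> then {} else Sset \<inter> {q. fst q = t \<and> ereal z \<le> snd q})"
proof -
  let ?C = "Sset \<inter> ({s..t} \<times> {ereal z..})"
  let ?Ox = "(if s = 0 then UNIV else {s<..}) \<inter> (if t = \<infinity> then UNIV else {..<t})"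
  let ?O = "Sset \<inter> (?Ox \<times> {ereal z<..})"
  have "closed ({s..t} \<times> {ereal z..})" by (intro closed_Times) auto
  then have cC: "closedin STop ?C" unfolding STop_def by (rule closedin_closed_Int)
  have "open (?Ox \<times> {ereal z<..})" by (intro open_Times open_Int) auto
  then have oO: "openin STop ?O" unfolding STop_def by (rule openin_open_Int)
  have "Vset s t z \<subseteq> ?C" unfolding Vset_def by (auto intro: less_imp_le)
  then have cl: "STop closure_of (Vset s t z) \<subseteq> ?C" using cC by (rule closure_of_minimal)
  have "?O \<subseteq> Vset s t z" unfolding Vset_def Sset_def
    by (auto split: if_splits intro: less_imp_le)
  then have int: "?O \<subseteq> STop interior_of (Vset s t z)" using oO by (rule interior_of_maximal)
  show ?thesis unfolding frontier_of_def
  proof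
    fix q assume "q \<in> STop closure_of Vset s t z - STop interior_of Vset s t z"
    then have "q \<in> ?C" "q \<notin> ?O" using cl int by auto
    then show "q \<in> (Sset \<inter> {q. snd q = ereal z}) \<union>
     (if s = 0 then {} else Sset \<inter> {q. fst q = s \<and> ereal z \<le> snd q}) \<union>
     (if t = \<infinity> then {} else Sset \<inter> {q. fst q = t \<and> ereal z \<le> snd q})"
      by (cases q) (auto split: if_splits simp: order.order_iff_strict)
  qed
qed

definition Lx where "Lx \<beta> a = Sset \<inter> {q. fst q = ereal a \<and> ereal \<beta> \<le> snd q}"
definition Ly where "Ly b = Sset \<inter> {q. snd q = ereal b}"
definition goodx where "goodx \<beta> a \<longleftrightarrow> 0 < a \<and> emeasure \<nu> (Lx \<beta> a) = 0"
definition goody where "goody b \<longleftrightarrow> 0 < b \<and> emeasure \<nu> (Ly b) = 0"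

lemma closed_sets_nu: "closed T \<Longrightarrow> Sset \<inter> T \<in> sets \<nu>"
  unfolding sets_nu using Sset_borel by auto

lemma open_sets_nu: "open T \<Longrightarrow> Sset \<inter> T \<in> sets \<nu>"
  unfolding sets_nu using Sset_borel by auto

lemma Lx_sets: "Lx \<beta> a \<in> sets \<nu>"
proof -
  have "Lx \<beta> a = Sset \<inter> ({ereal a} \<times> {ereal \<beta>..})" unfolding Lx_def by auto
  moreover have "closed ({ereal a} \<times> {ereal \<beta>..})" by (intro closed_Times) auto
  ultimately show ?thesis using closed_sets_nu by simp
qed

lemma Ly_sets: "Ly b \<in> sets \<nu>"
proof -
  have "Ly b = Sset \<inter> (UNIV \<times> {ereal b})" unfolding Ly_def by auto
  moreover have "closed (UNIV \<times> {ereal b})" by (intro closed_Times) auto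
  ultimately show ?thesis using closed_sets_nu by simp
qed

lemma V_sets: "Vset s t z \<in> sets \<nu>"
proof -
  have "Vset s t z = Sset \<inter> ({s..t} \<times> {ereal z<..})" unfolding Vset_def by auto
  moreover have "{s..t} \<times> {ereal z<..} \<in> sets borel"
  proof -
    have "{s..t} \<times> {ereal z<..} \<in> sets (borel \<Otimes>\<^sub>M borel)" by (intro pair_measureI) auto
    from this[unfolded borel_prod] show ?thesis .
  qed
  ultimately show ?thesis unfolding sets_nu using Sset_borel by auto
qed

lemma Kc_V:
  assumes "0 < \<beta>" "goody z" "\<beta> \<le> z"
    and hs: "s = 0 \<or> (\<exists>a. s = ereal a \<and> goodx \<beta> a)"
    and ht: "t = \<infinity> \<or> (\<exists>a. t = ereal a \<and> goodx \<beta> a)" and st: "s \<le> t"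
  shows "Kc (Vset s t z)"
proof -
  let ?F = "STop frontier_of (Vset s t z)"
  let ?N = "(Sset \<inter> {q. snd q = ereal z}) \<union>
     (if s = 0 then {} else Sset \<inter> {q. fst q = s \<and> ereal z \<le> snd q}) \<union>
     (if t = \<infinity> then {} else Sset \<inter> {q. fst q = t \<and> ereal z \<le> snd q})"
  have z0: "0 < z" using assms by (simp add: goody_def)
  have bz: "ereal \<beta> \<le> ereal z" using assms(3) by simp
  have n1: "Sset \<inter> {q. snd q = ereal z} \<in> null_sets \<nu>"
    using assms(2) Ly_sets unfolding goody_def Ly_def by auto
  have n2: "(if s = 0 then {} else Sset \<inter> {q. fst q = s \<and> ereal z \<le> snd q}) \<in> null_sets \<nu>"
  proof (cases "s = 0")
    case False
    then obtain a where a: "s = ereal a" "goodx \<beta> a" using hs by auto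
    have sub: "Sset \<inter> {q. fst q = s \<and> ereal z \<le> snd q} \<subseteq> Lx \<beta> a"
      unfolding Lx_def using a(1) bz by (auto intro: order_trans[OF bz])
    have "Sset \<inter> {q. fst q = s \<and> ereal z \<le> snd q} = Sset \<inter> ({s} \<times> {ereal z..})" by auto
    moreover have "closed ({s} \<times> {ereal z..})" by (intro closed_Times) auto
    ultimately have "Sset \<inter> {q. fst q = s \<and> ereal z \<le> snd q} \<in> sets \<nu>" using closed_sets_nu by simp
    moreover have "Lx \<beta> a \<in> null_sets \<nu>" using a(2) Lx_sets unfolding goodx_def by auto
    ultimately show ?thesis using False sub null_sets_subset by auto
  qed simp
  have n3: "(if t = \<infinity> then {} else Sset \<inter> {q. fst q = t \<and> ereal z \<le> snd q}) \<in> null_sets \<nu>"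
  proof (cases "t = \<infinity>")
    case False
    then obtain a where a: "t = ereal a" "goodx \<beta> a" using ht by auto
    have sub: "Sset \<inter> {q. fst q = t \<and> ereal z \<le> snd q} \<subseteq> Lx \<beta> a"
      unfolding Lx_def using a(1) bz by (auto intro: order_trans[OF bz])
    have "Sset \<inter> {q. fst q = t \<and> ereal z \<le> snd q} = Sset \<inter> ({t} \<times> {ereal z..})" by auto
    moreover have "closed ({t} \<times> {ereal z..})" by (intro closed_Times) auto
    ultimately have "Sset \<inter> {q. fst q = t \<and> ereal z \<le> snd q} \<in> sets \<nu>" using closed_sets_nu by simp
    moreover have "Lx \<beta> a \<in> null_sets \<nu>" using a(2) Lx_sets unfolding goodx_def by auto
    ultimately show ?thesis using False sub null_sets_subset by auto
  qed simp
  have nN: "?N \<in> null_sets \<nu>" using n1 n2 n3 by (intro null_sets.Un)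
  have F0: "emeasure \<nu> ?F = 0"
  proof (cases "?F \<in> sets \<nu>")
    case True
    then show ?thesis using null_sets_subset[OF nN True V_frontier] by auto
  qed (simp add: emeasure_notin_sets)
  have s0: "0 \<le> s" using hs unfolding goodx_def by auto
  have conv: "((\<lambda>u. ennreal (r u (Vset s t z))) \<longlongrightarrow> emeasure \<nu> (Vset s t z)) at_top"
    using A[OF s0 st z0 F0] unfolding r_def pre_def .
  have finV: "emeasure \<nu> (Vset s t z) < \<infinity>"
    by (rule fin[OF V_sets _ z0]) (auto simp: Vset_def intro: less_imp_le)
  then have "emeasure \<nu> (Vset s t z) = ennreal (measure \<nu> (Vset s t z))"
    by (simp add: emeasure_eq_ennreal_measure)
  with conv have "((\<lambda>u. ennreal (r u (Vset s t z))) \<longlongrightarrow> ennreal (measure \<nu> (Vset s t z))) at_top"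
    by simp
  moreover have "\<forall>\<^sub>F x in at_top. 0 \<le> r x (Vset s t z)" using eventually_gt_at_top[of 0]
    by eventually_elim (simp add: r_nonneg)
  ultimately have "((\<lambda>u. r u (Vset s t z)) \<longlongrightarrow> measure \<nu> (Vset s t z)) at_top"
    by (simp add: tendsto_ennreal_iff)
  then show ?thesis unfolding Kc_def using finV V_sets by auto
qed

end


lemma count_pos:
  fixes F :: "'i \<Rightarrow> 'b set" and N :: "'b measure"
  assumes W: "W \<in> sets N" "emeasure N W < \<infinity>" and F: "\<And>i. F i \<in> sets N" "\<And>i. F i \<subseteq> W"
    and dj: "disjoint_family F"
  shows "countable {i. emeasure N (F i) \<noteq> 0}"
proof -
  have finF: "emeasure N (F i) \<noteq> \<infinity>" for i
    using W F by (metis emeasure_mono linorder_not_le top.not_eq_extremum)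
  have sub: "{i. emeasure N (F i) \<noteq> 0} \<subseteq> (\<Union>m. {i. 1 / Suc m < measure N (F i)})"
  proof
    fix i assume "i \<in> {i. emeasure N (F i) \<noteq> 0}"
    then have "0 < measure N (F i)" using finF[of i]
      by (simp add: emeasure_eq_ennreal_measure measure_nonneg order_less_le)
    then obtain m where "inverse (real (Suc m)) < measure N (F i)"
      using reals_Archimedean by blast
    then show "i \<in> (\<Union>m. {i. 1 / Suc m < measure N (F i)})" by (auto simp: field_simps)
  qed
  have "finite {i. 1 / Suc m < measure N (F i)}" for m
  proof (rule ccontr)
    let ?J = "{i. 1 / Suc m < measure N (F i)}"
    define n where "n = Suc (nat \<lceil>Suc m * measure N W\<rceil>)"
    assume "infinite ?J"
    then obtain J where J: "J \<subseteq> ?J" "finite J" "card J = n"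
      using infinite_arbitrarily_large by blast
    have Jne: "J \<noteq> {}" using J(3) n_def by auto
    have "measure N (\<Union>i\<in>J. F i) = (\<Sum>i\<in>J. measure N (F i))"
      using J(2) F dj finF by (intro measure_finite_Union) (auto simp: disjoint_family_on_def disjoint_family_on_mono)
    also have "\<dots> > (\<Sum>i\<in>J. 1 / Suc m)"
      using J Jne by (intro sum_strict_mono) auto
    finally have "measure N (\<Union>i\<in>J. F i) > n / Suc m" using J(3) by simp
    moreover have "measure N (\<Union>i\<in>J. F i) \<le> measure N W"
      using W F J(2) by (intro measure_mono_fmeasurable) (auto simp: fmeasurable_def)
    moreover have "n / Suc m > measure N W"
    proof -
      have "real n > Suc m * measure N W" unfolding n_def by linarith
      then show ?thesis by (simp add: field_simps)
    qed
    ultimately show False by linarith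
  qed
  then have "countable (\<Union>m. {i. 1 / Suc m < measure N (F i)})"
    by (intro countable_UN) (auto intro: countable_finite)
  then show ?thesis using sub countable_subset by blast
qed

lemma exists_avoid:
  fixes B :: "real set" assumes "countable B" "a < b"
  shows "\<exists>c. a < c \<and> c < b \<and> c \<notin> B"
proof -
  have "uncountable {a<..<b}" using assms(2) by (simp add: uncountable_open_interval)
  then have "\<not> {a<..<b} \<subseteq> B" using assms(1) countable_subset by blast
  then show ?thesis by auto
qed

lemma dense_seq:
  fixes B :: "real set" and L :: real assumes "countable B"
  shows "\<exists>g::nat\<Rightarrow>real. (\<forall>k. L < g k \<and> g k \<notin> B) \<and>
           (\<forall>u v. L \<le> u \<longrightarrow> u < v \<longrightarrow> (\<exists>k. u < g k \<and> g k < v))"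
proof -
  define hh :: "rat \<times> rat \<Rightarrow> real" where
    "hh pq = (if max L (of_rat (fst pq)) < of_rat (snd pq)
       then (SOME c. max L (of_rat (fst pq)) < c \<and> c < of_rat (snd pq) \<and> c \<notin> B)
       else (SOME c. L < c \<and> c < L + 1 \<and> c \<notin> B))" for pq
  have hh: "L < hh pq \<and> hh pq \<notin> B \<and> (max L (of_rat (fst pq)) < of_rat (snd pq) \<longrightarrow>
       of_rat (fst pq) < hh pq \<and> hh pq < of_rat (snd pq))" for pq
  proof (cases "max L (of_rat (fst pq)) < of_rat (snd pq)")
    case True
    then show ?thesis unfolding hh_def
      using someI_ex[OF exists_avoid[OF assms True]] by auto
  next
    case False
    have "L < L + 1" by simp
    then show ?thesis unfolding hh_def
      using False someI_ex[OF exists_avoid[OF assms \<open>L < L + 1\<close>]] by auto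
  qed
  define g where "g k = hh (from_nat k)" for k
  show ?thesis
  proof (intro exI[of _ g] conjI allI impI)
    fix k show "L < g k" "g k \<notin> B" unfolding g_def using hh by auto
  next
    fix u v :: real assume uv: "L \<le> u" "u < v"
    obtain p where p: "u < p" "p < v" "p \<in> \<rat>" using Rats_dense_in_real uv(2) by blast
    obtain q where q: "p < q" "q < v" "q \<in> \<rat>" using Rats_dense_in_real p(2) by blast
    obtain p' q' :: rat where pq: "p = of_rat p'" "q = of_rat q'" using p(3) q(3) Rats_cases by metis
    have "max L (of_rat (fst (p', q'))) < of_rat (snd (p', q'))"
      using pq p q uv by auto
    then have "p < hh (p', q')" "hh (p', q') < q" using hh[of "(p', q')"] pq by auto
    then show "\<exists>k. u < g k \<and> g k < v"
      using p q by (intro exI[of _ "to_nat (p', q')"]) (simp add: g_def)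
  qed
qed

lemma fine1:
  fixes g :: "nat \<Rightarrow> real" and x :: ereal
  assumes dense: "\<forall>u v. L \<le> u \<longrightarrow> u < v \<longrightarrow> (\<exists>k. u < g k \<and> g k < v)"
    and B: "open B" "x \<in> B" and xL: "ereal L \<le> x"
  shows "\<exists>n. \<forall>x'. ereal L \<le> x' \<longrightarrow> (\<forall>k<n. (x' \<le> ereal (g k)) = (x \<le> ereal (g k))) \<longrightarrow> x' \<in> B"
proof (cases x)
  case PInf
  obtain r where r: "{ereal r<..} \<subseteq> B" using open_PInfty B PInf by blast
  obtain k where k: "max L r < g k" using dense[rule_format, of "max L r" "max L r + 1"] by auto
  show ?thesis
  proof (intro exI[of _ "Suc k"] allI impI)
    fix x' assume "\<forall>k'<Suc k. (x' \<le> ereal (g k')) = (x \<le> ereal (g k'))"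
    then have "\<not> x' \<le> ereal (g k)" using PInf by auto
    then have "ereal (g k) < x'" by (simp add: not_le)
    moreover have "ereal r < ereal (g k)" using k by simp
    ultimately have "ereal r < x'" by (rule less_trans[rotated])
    then show "x' \<in> B" using r by auto
  qed
next
  case MInf then show ?thesis using xL by simp
next
  case (real r)
  obtain a b where ab: "a < x" "x < b" "{a<..<b} \<subseteq> B"
    using ereal_open_cont_interval2[OF B] real by auto
  obtain b' where b': "x < ereal b'" "ereal b' < b" using ereal_dense2[OF ab(2)] by blast
  obtain a' where a': "a < ereal a'" "ereal a' < x" using ereal_dense2[OF ab(1)] by blast
  have rL: "L \<le> r" using xL real by simp
  have rb: "r < b'" using b'(1) real by simp
  obtain k1 where k1: "r < g k1" "g k1 < b'" using dense[rule_format, OF rL rb] by blast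
  show ?thesis
  proof (cases "L < r")
    case True
    have ar: "max L a' < r" using True a'(2) real by simp
    obtain k2 where k2: "max L a' < g k2" "g k2 < r" using dense[rule_format, OF _ ar] by auto
    show ?thesis
    proof (intro exI[of _ "Suc (max k1 k2)"] allI impI)
      fix x' assume H: "\<forall>k<Suc (max k1 k2). (x' \<le> ereal (g k)) = (x \<le> ereal (g k))"
      have "x' \<le> ereal (g k1)" using H[rule_format, of k1] k1 real by auto
      moreover have "\<not> x' \<le> ereal (g k2)" using H[rule_format, of k2] k2 real by auto
      ultimately have x1: "x' \<le> ereal (g k1)" and x2: "ereal (g k2) < x'" by (auto simp: not_le)
      have e1: "ereal (g k1) < ereal b'" "ereal a' < ereal (g k2)" using k1 k2 by auto
      have "x' < b" using x1 e1(1) b'(2) by (meson le_less_trans less_trans)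
      moreover have "a < x'" using x2 e1(2) a'(1) by (meson less_trans)
      ultimately have "x' < b" "a < x'" by auto
      then show "x' \<in> B" using ab by auto
    qed
  next
    case False
    then have rL': "r = L" using rL by simp
    show ?thesis
    proof (intro exI[of _ "Suc k1"] allI impI)
      fix x' assume H: "ereal L \<le> x'" "\<forall>k<Suc k1. (x' \<le> ereal (g k)) = (x \<le> ereal (g k))"
      have "x' \<le> ereal (g k1)" using H(2)[rule_format, of k1] k1 real by auto
      moreover have "ereal (g k1) < ereal b'" using k1 by auto
      ultimately have "x' < b" using b'(2) by (meson le_less_trans less_trans)
      moreover have "a < x'" using H(1) ab(1) real rL' by (auto intro: less_le_trans)
      ultimately show "x' \<in> B" using ab by auto
    qed
  qed
qed



locale L53g = L53 +
  fixes \<beta> :: real and g h :: "nat \<Rightarrow> real"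
  assumes b0: "0 < \<beta>" and gb: "goody \<beta>"
    and gx: "\<And>k. goodx \<beta> (g k)" and gd: "\<forall>u v. 0 \<le> u \<longrightarrow> u < v \<longrightarrow> (\<exists>k. u < g k \<and> g k < v)"
    and hy: "\<And>k. goody (h k) \<and> \<beta> < h k" and hd: "\<forall>u v. \<beta> \<le> u \<longrightarrow> u < v \<longrightarrow> (\<exists>k. u < h k \<and> h k < v)"
begin

definition R where "R = Sset \<inter> {q. ereal \<beta> < snd q}"

definition pc where "pc n f1 f2 = {q'\<in>R. (\<forall>k<n. (fst q' \<le> ereal (g k)) = f1 k) \<and> (\<forall>k<n. (snd q' \<le> ereal (h k)) = f2 k)}"

definition piece where "piece n q = pc n (\<lambda>k. fst q \<le> ereal (g k)) (\<lambda>k. snd q \<le> ereal (h k))"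

lemma piece_self: "q \<in> R \<Longrightarrow> q \<in> piece n q" unfolding piece_def pc_def by simp

lemma piece_R: "piece n q \<subseteq> R" unfolding piece_def pc_def by auto

lemma piece_eq: assumes "q' \<in> piece n q" shows "piece n q' = piece n q"
proof -
  from assms have H: "\<forall>k<n. (fst q' \<le> ereal (g k)) = (fst q \<le> ereal (g k))"
    "\<forall>k<n. (snd q' \<le> ereal (h k)) = (snd q \<le> ereal (h k))" unfolding piece_def pc_def by auto
  show ?thesis unfolding piece_def pc_def using H by simp
qed

lemma piece_mono: "n \<le> n' \<Longrightarrow> piece n' q \<subseteq> piece n q" unfolding piece_def pc_def by auto

lemma piece_finite: "finite (piece n ` R)"
proof -
  have "piece n ` R \<subseteq> (\<lambda>(f1, f2). pc n f1 f2) ` (({..<n} \<rightarrow>\<^sub>E UNIV) \<times> ({..<n} \<rightarrow>\<^sub>E UNIV))"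
  proof
    fix P assume "P \<in> piece n ` R"
    then obtain q where q: "P = piece n q" by auto
    have e: "P = pc n (restrict (\<lambda>k. fst q \<le> ereal (g k)) {..<n}) (restrict (\<lambda>k. snd q \<le> ereal (h k)) {..<n})"
      unfolding q piece_def pc_def by simp
    show "P \<in> (\<lambda>(f1, f2). pc n f1 f2) ` (({..<n} \<rightarrow>\<^sub>E UNIV) \<times> ({..<n} \<rightarrow>\<^sub>E UNIV))"
    proof (rule image_eqI)
      show "P = (\<lambda>(f1, f2). pc n f1 f2) (restrict (\<lambda>k. fst q \<le> ereal (g k)) {..<n}, restrict (\<lambda>k. snd q \<le> ereal (h k)) {..<n})"
        using e by simp
      show "(restrict (\<lambda>k. fst q \<le> ereal (g k)) {..<n}, restrict (\<lambda>k. snd q \<le> ereal (h k)) {..<n})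
       \<in> ({..<n} \<rightarrow>\<^sub>E UNIV) \<times> ({..<n} \<rightarrow>\<^sub>E UNIV)" by simp
    qed
  qed
  moreover have "finite (({..<n} \<rightarrow>\<^sub>E (UNIV::bool set)) \<times> ({..<n} \<rightarrow>\<^sub>E (UNIV::bool set)))"
    by (intro finite_cartesian_product finite_PiE) auto
  ultimately show ?thesis by (rule finite_subset[OF _ finite_imageI])
qed

lemma piece_prod: "piece n q =
   {x. 0 \<le> x \<and> (\<forall>k<n. (x \<le> ereal (g k)) = (fst q \<le> ereal (g k)))} \<times>
   {y. ereal \<beta> < y \<and> (\<forall>k<n. (y \<le> ereal (h k)) = (snd q \<le> ereal (h k)))}"
proof -
  have b: "0 < ereal \<beta>" using b0 by simp
  then show ?thesis unfolding piece_def pc_def R_def Sset_def by (auto intro: less_trans[OF b])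
qed

lemma interval_conn:
  fixes c :: "ereal" and P :: "ereal \<Rightarrow> bool" and a :: "nat \<Rightarrow> ereal"
  assumes P: "\<And>x y z. P x \<Longrightarrow> P y \<Longrightarrow> x \<le> z \<Longrightarrow> z \<le> y \<Longrightarrow> P z"
  shows "connected {x. P x \<and> (\<forall>k<n. (x \<le> a k) = (c \<le> a k))}"
  unfolding connected_iff_interval
proof (intro ballI allI impI)
  fix x y z assume x: "x \<in> {x. P x \<and> (\<forall>k<n. (x \<le> a k) = (c \<le> a k))}"
    and y: "y \<in> {x. P x \<and> (\<forall>k<n. (x \<le> a k) = (c \<le> a k))}" and xz: "x \<le> z" and zy: "z \<le> y"
  have "P z" using P x y xz zy by blast
  moreover have "(z \<le> a k) = (c \<le> a k)" if k: "k < n" for k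
  proof (cases "c \<le> a k")
    case True
    then have "y \<le> a k" using y k by auto
    then show ?thesis using True zy by auto
  next
    case False
    then have "\<not> x \<le> a k" using x k by auto
    then have "\<not> z \<le> a k" using xz by auto
    then show ?thesis using False by auto
  qed
  ultimately show "z \<in> {x. P x \<and> (\<forall>k<n. (x \<le> a k) = (c \<le> a k))}" by auto
qed

lemma piece_conn: "connected (piece n q)"
  unfolding piece_prod
proof (intro connected_Times)
  show "connected {x. 0 \<le> x \<and> (\<forall>k<n. (x \<le> ereal (g k)) = (fst q \<le> ereal (g k)))}"
    by (rule interval_conn[of "\<lambda>x. 0 \<le> x" n "\<lambda>k. ereal (g k)" "fst q"]) auto
  show "connected {y. ereal \<beta> < y \<and> (\<forall>k<n. (y \<le> ereal (h k)) = (snd q \<le> ereal (h k)))}"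
    by (rule interval_conn[of "\<lambda>x. ereal \<beta> < x" n "\<lambda>k. ereal (h k)" "snd q"]) auto
qed

lemma piece_fine: assumes "q \<in> R" "open U" "q \<in> U" shows "\<exists>n. piece n q \<subseteq> U"
proof -
  obtain A B where AB: "open A" "open B" "q \<in> A \<times> B" "A \<times> B \<subseteq> U"
    using open_prod_elim[OF assms(2,3)] by blast
  have q0: "ereal 0 \<le> fst q" "ereal \<beta> \<le> snd q" using assms(1) unfolding R_def Sset_def
    by (auto simp: zero_ereal_def[symmetric])
  obtain n1 where n1: "\<forall>x'. ereal 0 \<le> x' \<longrightarrow> (\<forall>k<n1. (x' \<le> ereal (g k)) = (fst q \<le> ereal (g k))) \<longrightarrow> x' \<in> A"
    using fine1[OF gd AB(1) _ q0(1)] AB(3) by auto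
  obtain n2 where n2: "\<forall>x'. ereal \<beta> \<le> x' \<longrightarrow> (\<forall>k<n2. (x' \<le> ereal (h k)) = (snd q \<le> ereal (h k))) \<longrightarrow> x' \<in> B"
    using fine1[OF hd AB(2) _ q0(2)] AB(3) by auto
  have "piece (max n1 n2) q \<subseteq> A \<times> B"
  proof
    fix q' assume "q' \<in> piece (max n1 n2) q"
    then have H: "q' \<in> R" "\<forall>k<max n1 n2. (fst q' \<le> ereal (g k)) = (fst q \<le> ereal (g k))"
      "\<forall>k<max n1 n2. (snd q' \<le> ereal (h k)) = (snd q \<le> ereal (h k))"
      unfolding piece_def pc_def by auto
    have "ereal 0 \<le> fst q'" "ereal \<beta> \<le> snd q'" using H(1) unfolding R_def Sset_def
      by (auto simp: zero_ereal_def[symmetric])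
    then show "q' \<in> A \<times> B" using n1 n2 H(2,3) by (cases q') auto
  qed
  then show ?thesis using AB(4) by blast
qed

lemma piece_sets: "piece n q \<in> sets \<nu>"
proof -
  have X: "{q'::ereal\<times>ereal. (fst q' \<le> ereal a) = c} \<in> sets borel" for a c
  proof -
    have e: "{q'::ereal\<times>ereal. fst q' \<le> ereal a} = {..ereal a} \<times> UNIV" by auto
    have cl: "closed {q'::ereal\<times>ereal. fst q' \<le> ereal a}" unfolding e by (intro closed_Times) auto
    show ?thesis
    proof (cases c)
      case True then show ?thesis using borel_closed[OF cl] by simp
    next
      case False
      have "{q'::ereal\<times>ereal. (fst q' \<le> ereal a) = c} = - {q'. fst q' \<le> ereal a}" using False by auto
      then show ?thesis using borel_open[OF open_Compl[OF cl]] by simp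
    qed
  qed
  have Y: "{q'::ereal\<times>ereal. (snd q' \<le> ereal a) = c} \<in> sets borel" for a c
  proof -
    have e: "{q'::ereal\<times>ereal. snd q' \<le> ereal a} = UNIV \<times> {..ereal a}" by auto
    have cl: "closed {q'::ereal\<times>ereal. snd q' \<le> ereal a}" unfolding e by (intro closed_Times) auto
    show ?thesis
    proof (cases c)
      case True then show ?thesis using borel_closed[OF cl] by simp
    next
      case False
      have "{q'::ereal\<times>ereal. (snd q' \<le> ereal a) = c} = - {q'. snd q' \<le> ereal a}" using False by auto
      then show ?thesis using borel_open[OF open_Compl[OF cl]] by simp
    qed
  qed
  have eb: "{q'::ereal\<times>ereal. ereal \<beta> < snd q'} = UNIV \<times> {ereal \<beta><..}" by auto
  have B: "{q'::ereal\<times>ereal. ereal \<beta> < snd q'} \<in> sets borel"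
    unfolding eb by (intro borel_open open_Times) auto
  have I: "(\<Inter>k\<in>{..<n}. {q'::ereal\<times>ereal. (fst q' \<le> ereal (g k)) = (fst q \<le> ereal (g k))} \<inter>
       {q'. (snd q' \<le> ereal (h k)) = (snd q \<le> ereal (h k))}) \<in> sets borel"
    using X Y by (intro sets.countable_INT'') auto
  have "piece n q = Sset \<inter> ({q'. ereal \<beta> < snd q'} \<inter> (\<Inter>k\<in>{..<n}. {q'::ereal\<times>ereal. (fst q' \<le> ereal (g k)) = (fst q \<le> ereal (g k))} \<inter>
       {q'. (snd q' \<le> ereal (h k)) = (snd q \<le> ereal (h k))}))"
    unfolding piece_def pc_def R_def by auto
  then show ?thesis unfolding sets_nu using Sset_borel B I by auto
qed

end


context L53g begin

lemma piece_Kc: assumes qR: "q \<in> R" shows "Kc (piece n q)"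
proof -
  define SX where "SX = {k. k < n \<and> ereal (g k) < fst q}"
  define TX where "TX = {k. k < n \<and> fst q \<le> ereal (g k)}"
  define SY where "SY = {k. k < n \<and> ereal (h k) < snd q}"
  define TY where "TY = {k. k < n \<and> snd q \<le> ereal (h k)}"
  define s where "s = (if SX = {} then 0 else ereal (Max (g ` SX)))"
  define t where "t = (if TX = {} then \<infinity> else ereal (Min (g ` TX)))"
  define z where "z = (if SY = {} then \<beta> else Max (h ` SY))"
  define w where "w = Min (h ` TY)"
  define Q where "Q = Vset s t z - (if TY = {} then {} else Vset s t w)"
  define N where "N = (if SX = {} then {} else Vset s s \<beta>)"
  have fin: "finite SX" "finite TX" "finite SY" "finite TY" unfolding SX_def TX_def SY_def TY_def by auto
  have qS: "q \<in> Sset" "ereal \<beta> < snd q" using qR unfolding R_def by auto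
  have q0: "0 \<le> fst q" using qS(1) unfolding Sset_def by auto
  have sX: "\<exists>k0\<in>SX. Max (g ` SX) = g k0" if ne: "SX \<noteq> {}"
  proof -
    have "Max (g ` SX) \<in> g ` SX" using fin(1) ne by (intro Max_in) auto
    then show ?thesis by auto
  qed
  have tX: "\<exists>k1\<in>TX. Min (g ` TX) = g k1" if ne: "TX \<noteq> {}"
  proof -
    have "Min (g ` TX) \<in> g ` TX" using fin(2) ne by (intro Min_in) auto
    then show ?thesis by auto
  qed
  have sY: "\<exists>k2\<in>SY. Max (h ` SY) = h k2" if ne: "SY \<noteq> {}"
  proof -
    have "Max (h ` SY) \<in> h ` SY" using fin(3) ne by (intro Max_in) auto
    then show ?thesis by auto
  qed
  have tY: "\<exists>k3\<in>TY. Min (h ` TY) = h k3" if ne: "TY \<noteq> {}"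
  proof -
    have "Min (h ` TY) \<in> h ` TY" using fin(4) ne by (intro Min_in) auto
    then show ?thesis by auto
  qed
  have s_good: "s = 0 \<or> (\<exists>a. s = ereal a \<and> goodx \<beta> a)"
  proof (cases "SX = {}")
    case False then obtain k0 where "Max (g ` SX) = g k0" using sX by blast
    then show ?thesis using gx[of k0] False unfolding s_def by auto
  qed (simp add: s_def)
  have t_good: "t = \<infinity> \<or> (\<exists>a. t = ereal a \<and> goodx \<beta> a)"
  proof (cases "TX = {}")
    case False then obtain k1 where "Min (g ` TX) = g k1" using tX by blast
    then show ?thesis using gx[of k1] False unfolding t_def by auto
  qed (simp add: t_def)
  have z_good: "goody z \<and> \<beta> \<le> z"
  proof (cases "SY = {}")
    case False then obtain k2 where "Max (h ` SY) = h k2" using sY by blast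
    then show ?thesis using hy[of k2] False unfolding z_def by (auto intro: less_imp_le)
  qed (simp add: z_def gb)
  then have z_good: "goody z" "\<beta> \<le> z" by auto
  have s_le: "s \<le> fst q"
  proof (cases "SX = {}")
    case True then show ?thesis using q0 unfolding s_def by simp
  next
    case False then obtain k0 where "k0 \<in> SX" "Max (g ` SX) = g k0" using sX by blast
    then show ?thesis unfolding s_def SX_def using False by auto
  qed
  have t_ge: "fst q \<le> t"
  proof (cases "TX = {}")
    case True then show ?thesis unfolding t_def by simp
  next
    case False then obtain k1 where "k1 \<in> TX" "Min (g ` TX) = g k1" using tX by blast
    then show ?thesis unfolding t_def TX_def using False by auto
  qed
  have z_lt: "ereal z < snd q"
  proof (cases "SY = {}")
    case True then show ?thesis using qS unfolding z_def by simp
  next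
    case False then obtain k2 where "k2 \<in> SY" "Max (h ` SY) = h k2" using sY by blast
    then show ?thesis unfolding z_def SY_def using False by auto
  qed
  have s0: "0 \<le> s" using s_good gx unfolding goodx_def by auto
  have st: "s \<le> t" using s_le t_ge by auto
  have KV: "Kc (Vset s t z)" by (rule Kc_V[OF b0 z_good(1) z_good(2) s_good t_good st])
  have KQ: "Kc Q"
  proof (cases "TY = {}")
    case True then show ?thesis using KV unfolding Q_def by simp
  next
    case False
    then obtain k3 where k3: "k3 \<in> TY" "w = h k3" using tY unfolding w_def by blast
    have wg: "goody w" "\<beta> \<le> w" using hy k3(2) by (auto intro: less_imp_le)
    have KW: "Kc (Vset s t w)" by (rule Kc_V[OF b0 wg s_good t_good st])
    have "snd q \<le> ereal w" using k3 unfolding TY_def by auto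
    then have zw: "ereal z < ereal w" using z_lt by (rule less_le_trans[rotated])
    have "Vset s t w \<subseteq> Vset s t z" unfolding Vset_def by (auto intro: less_trans[OF zw])
    then show ?thesis using Kc_diff[OF KV KW] False unfolding Q_def by simp
  qed
  have KN: "Kc N" and N0: "emeasure \<nu> N = 0"
  proof -
    have "Kc N \<and> emeasure \<nu> N = 0"
    proof (cases "SX = {}")
      case True then show ?thesis unfolding N_def by (simp add: Kc_empty)
    next
      case False
      then obtain k0 where "Max (g ` SX) = g k0" using sX by blast
      then obtain a where a: "s = ereal a" "goodx \<beta> a" using gx[of k0] False unfolding s_def by auto
      have b_le: "\<beta> \<le> \<beta>" by simp
      have "Kc (Vset s s \<beta>)"
        by (rule Kc_V[OF b0 gb b_le]) (use a in auto)
      moreover have "Vset s s \<beta> \<subseteq> Lx \<beta> a" unfolding Vset_def Lx_def using a(1)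
        by (auto intro: less_imp_le)
      then have "emeasure \<nu> (Vset s s \<beta>) = 0" using a(2) Lx_sets unfolding goodx_def
        by (metis emeasure_mono le_zero_eq)
      ultimately show ?thesis unfolding N_def using False by simp
    qed
    then show "Kc N" "emeasure \<nu> N = 0" by auto
  qed
  have sub1: "piece n q \<subseteq> Q"
  proof
    fix q' assume q': "q' \<in> piece n q"
    then have H: "q' \<in> R" "\<And>k. k < n \<Longrightarrow> (fst q' \<le> ereal (g k)) = (fst q \<le> ereal (g k))"
      "\<And>k. k < n \<Longrightarrow> (snd q' \<le> ereal (h k)) = (snd q \<le> ereal (h k))"
      unfolding piece_def pc_def by auto
    have q'S: "q' \<in> Sset" "ereal \<beta> < snd q'" using H(1) unfolding R_def by auto
    have a1: "s \<le> fst q'"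
    proof (cases "SX = {}")
      case True then show ?thesis using q'S unfolding s_def Sset_def by auto
    next
      case False then obtain k0 where k0: "k0 \<in> SX" "Max (g ` SX) = g k0" using sX by blast
      then have "\<not> fst q \<le> ereal (g k0)" "k0 < n" unfolding SX_def by auto
      then have "\<not> fst q' \<le> ereal (g k0)" using H(2) by auto
      then show ?thesis unfolding s_def using False k0 by auto
    qed
    have a2: "fst q' \<le> t"
    proof (cases "TX = {}")
      case True then show ?thesis unfolding t_def by simp
    next
      case False then obtain k1 where k1: "k1 \<in> TX" "Min (g ` TX) = g k1" using tX by blast
      then have "fst q \<le> ereal (g k1)" "k1 < n" unfolding TX_def by auto
      then have "fst q' \<le> ereal (g k1)" using H(2) by auto
      then show ?thesis unfolding t_def using False k1 by auto
    qed
    have a3: "ereal z < snd q'"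
    proof (cases "SY = {}")
      case True then show ?thesis using q'S unfolding z_def by auto
    next
      case False then obtain k2 where k2: "k2 \<in> SY" "Max (h ` SY) = h k2" using sY by blast
      then have "\<not> snd q \<le> ereal (h k2)" "k2 < n" unfolding SY_def by auto
      then have "\<not> snd q' \<le> ereal (h k2)" using H(3) by auto
      then show ?thesis unfolding z_def using False k2 by auto
    qed
    have a4: "q' \<notin> (if TY = {} then {} else Vset s t w)"
    proof (cases "TY = {}")
      case False then obtain k3 where k3: "k3 \<in> TY" "Min (h ` TY) = h k3" using tY by blast
      then have "snd q \<le> ereal (h k3)" "k3 < n" unfolding TY_def by auto
      then have "snd q' \<le> ereal (h k3)" using H(3) by auto
      then show ?thesis unfolding Vset_def w_def using False k3 by auto
    qed simp
    show "q' \<in> Q" unfolding Q_def using a1 a2 a3 a4 q'S(1) unfolding Vset_def by (cases q') auto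
  qed
  have sub2: "Q - N \<subseteq> piece n q"
  proof
    fix q' assume q': "q' \<in> Q - N"
    then have V: "q' \<in> Sset" "s \<le> fst q'" "fst q' \<le> t" "ereal z < snd q'"
      unfolding Q_def Vset_def by (cases q', auto)+
    have nW: "TY \<noteq> {} \<Longrightarrow> snd q' \<le> ereal w" using q' V unfolding Q_def Vset_def
      by (cases q') (auto simp: not_less)
    have nN: "SX \<noteq> {} \<Longrightarrow> q' \<notin> Vset s s \<beta>" using q' unfolding N_def by auto
    have bz: "ereal \<beta> \<le> ereal z" using z_good(2) by simp
    have "ereal \<beta> < snd q'" using bz V(4) by (rule le_less_trans)
    then have qR': "q' \<in> R" using V unfolding R_def by auto
    have X: "(fst q' \<le> ereal (g k)) = (fst q \<le> ereal (g k))" if k: "k < n" for k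
    proof (cases "fst q \<le> ereal (g k)")
      case True
      then have "k \<in> TX" using k unfolding TX_def by auto
      then have "t \<le> ereal (g k)" using fin(2) unfolding t_def by auto
      then show ?thesis using True V(3) by auto
    next
      case False
      then have kS: "k \<in> SX" using k unfolding SX_def by auto
      then have ne: "SX \<noteq> {}" by auto
      have "ereal (g k) \<le> s" using fin(1) kS unfolding s_def by auto
      moreover have "fst q' \<noteq> ereal (g k)"
      proof
        assume e: "fst q' = ereal (g k)"
        then have "fst q' = s" using V(2) \<open>ereal (g k) \<le> s\<close> by auto
        moreover have "ereal \<beta> < snd q'" using qR' unfolding R_def by auto
        ultimately have "q' \<in> Vset s s \<beta>" using V(1) unfolding Vset_def by (cases q') auto
        then show False using nN ne by auto
      qed
      ultimately have "ereal (g k) < fst q'" using V(2) by auto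
      then show ?thesis using False by auto
    qed
    have Y: "(snd q' \<le> ereal (h k)) = (snd q \<le> ereal (h k))" if k: "k < n" for k
    proof (cases "snd q \<le> ereal (h k)")
      case True
      then have kT: "k \<in> TY" using k unfolding TY_def by auto
      then have "w \<le> h k" using fin(4) unfolding w_def by auto
      then have wh: "ereal w \<le> ereal (h k)" by simp
      have "snd q' \<le> ereal w" using nW kT by auto
      then have "snd q' \<le> ereal (h k)" using wh by (rule order_trans)
      then show ?thesis using True by simp
    next
      case False
      then have kS: "k \<in> SY" using k unfolding SY_def by auto
      then have "h k \<le> z" using fin(3) unfolding z_def by auto
      then have "ereal (h k) \<le> ereal z" by simp
      then have "ereal (h k) < snd q'" using V(4) by (rule le_less_trans)
      then show ?thesis using False by auto
    qed
    show "q' \<in> piece n q" unfolding piece_def pc_def using qR' X Y by auto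
  qed
  have PS: "piece n q \<in> sets \<nu>" by (rule piece_sets)
  have QS: "Q \<in> sets \<nu>" using KQ unfolding Kc_def by auto
  have K2: "Kc (Q - piece n q)"
    by (rule Kc_null_sub[OF KN N0]) (use sub2 QS PS in auto)
  have "Kc (Q - (Q - piece n q))" by (rule Kc_diff[OF KQ K2]) auto
  moreover have "Q - (Q - piece n q) = piece n q" using sub1 by auto
  ultimately show ?thesis by simp
qed

end


context L53g begin

lemma fin_R: "K \<in> sets \<nu> \<Longrightarrow> K \<subseteq> R \<Longrightarrow> emeasure \<nu> K < \<infinity>"
  by (rule fin[OF _ _ b0]) (auto simp: R_def intro: less_imp_le)

lemma piece_unique: assumes "P \<in> piece n ` R" "x \<in> P" shows "P = piece n x"
proof -
  from assms(1) obtain q where q: "P = piece n q" by auto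
  with assms(2) show ?thesis using piece_eq[of x n q] by simp
qed

lemma pieces_R: "P \<in> piece n ` R \<Longrightarrow> P \<subseteq> R"
  using piece_R by blast

lemma Kc_Union_pieces: "F \<subseteq> piece n ` R \<Longrightarrow> Kc (\<Union>F)"
proof (rule Kc_Union)
  assume F: "F \<subseteq> piece n ` R"
  show "finite F" using F piece_finite finite_subset by blast
  show "Kc P" if "P \<in> F" for P using that F piece_Kc by auto
  show "P \<inter> Q = {}" if "P \<in> F" "Q \<in> F" "P \<noteq> Q" for P Q
  proof (rule ccontr)
    assume "P \<inter> Q \<noteq> {}"
    then obtain x where x: "x \<in> P" "x \<in> Q" by auto
    have "P \<in> piece n ` R" "Q \<in> piece n ` R" using that(1,2) F by blast+
    then have "P = piece n x" "Q = piece n x" using x piece_unique by metis+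
    then show False using that by simp
  qed
qed

lemma sets_Union_pieces: "F \<subseteq> piece n ` R \<Longrightarrow> \<Union>F \<in> sets \<nu>"
  using Kc_Union_pieces unfolding Kc_def by auto

lemma main_g:
  assumes C: "C \<in> sets \<nu>" "C \<subseteq> R" and D: "STop frontier_of C \<subseteq> R"
    and D0: "emeasure \<nu> (STop frontier_of C) = 0"
  shows "((\<lambda>t. r t C) \<longlongrightarrow> measure \<nu> C) at_top"
proof -
  let ?D = "STop frontier_of C"
  define A where "A n = \<Union>{P \<in> piece n ` R. P \<subseteq> C}" for n
  define B where "B n = \<Union>{P \<in> piece n ` R. P \<inter> C \<noteq> {}}" for n
  define E where "E n = \<Union>{P \<in> piece n ` R. P \<inter> ?D \<noteq> {}}" for n
  have KA: "Kc (A n)" for n unfolding A_def by (rule Kc_Union_pieces) auto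
  have KB: "Kc (B n)" for n unfolding B_def by (rule Kc_Union_pieces) auto
  have SE: "E n \<in> sets \<nu>" for n unfolding E_def by (rule sets_Union_pieces) auto
  have AC: "A n \<subseteq> C" for n unfolding A_def by auto
  have CB: "C \<subseteq> B n" for n
  proof
    fix x assume "x \<in> C"
    then have xR: "x \<in> R" using C by auto
    then have "x \<in> R" "x \<in> piece n x" using piece_self[OF xR] by auto
    then show "x \<in> B n" unfolding B_def using \<open>x \<in> C\<close> by blast
  qed
  have BAE: "B n - A n \<subseteq> E n" for n
  proof
    fix x assume x: "x \<in> B n - A n"
    then obtain P where P: "P \<in> piece n ` R" "P \<inter> C \<noteq> {}" "x \<in> P" unfolding B_def by auto
    have "\<not> P \<subseteq> C"
    proof
      assume "P \<subseteq> C"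
      then have "P \<in> {P \<in> piece n ` R. P \<subseteq> C}" using P(1) by simp
      then have "x \<in> A n" unfolding A_def using P(3) by (rule UnionI)
      then show False using x by simp
    qed
    then have "P - C \<noteq> {}" by auto
    moreover have "connectedin STop P"
    proof -
      obtain q where q: "P = piece n q" using P(1) by auto
      have "P \<subseteq> Sset" using piece_R unfolding q R_def by auto
      then show ?thesis unfolding STop_def q using piece_conn
        by (simp add: connectedin_subtopology)
    qed
    ultimately have "P \<inter> ?D \<noteq> {}" using connectedin_Int_frontier_of[of STop P C] P(2) by simp
    then have "P \<in> {P \<in> piece n ` R. P \<inter> ?D \<noteq> {}}" using P(1) by simp
    then show "x \<in> E n" unfolding E_def using P(3) by (rule UnionI)
  qed
  have Edec: "E (Suc n) \<subseteq> E n" for n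
  proof
    fix x assume "x \<in> E (Suc n)"
    then obtain P where P: "P \<in> piece (Suc n) ` R" "P \<inter> ?D \<noteq> {}" "x \<in> P" unfolding E_def by auto
    have xR: "x \<in> R" using pieces_R[OF P(1)] P(3) by blast
    have "P = piece (Suc n) x" using piece_unique[OF P(1) P(3)] .
    then have "P \<subseteq> piece n x" using piece_mono[of n "Suc n"] by simp
    then have "piece n x \<inter> ?D \<noteq> {}" using P(2) by blast
    moreover have "piece n x \<in> piece n ` R" using xR by (rule imageI)
    ultimately have "piece n x \<in> {P \<in> piece n ` R. P \<inter> ?D \<noteq> {}}" by simp
    then show "x \<in> E n" unfolding E_def using piece_self[OF xR] by (rule UnionI)
  qed
  then have decE: "decseq E" by (rule decseq_SucI)
  have ER: "E n \<subseteq> R" for n unfolding E_def using pieces_R by blast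
  have finE: "emeasure \<nu> (E n) \<noteq> \<infinity>" for n using fin_R[OF SE ER] by (simp add: less_top)
  have IE: "(\<Inter>n. E n) \<subseteq> ?D"
  proof
    fix x assume x: "x \<in> (\<Inter>n. E n)"
    then have xR: "x \<in> R" using ER by blast
    show "x \<in> ?D"
    proof (rule ccontr)
      assume nD: "x \<notin> ?D"
      have "closedin STop ?D" by (rule closedin_frontier_of)
      then obtain T where T: "closed T" "?D = Sset \<inter> T" unfolding STop_def closedin_closed
        by blast
      have "x \<in> Sset" using xR unfolding R_def by blast
      then have "x \<notin> T" using nD T(2) by blast
      then obtain n where n: "piece n x \<subseteq> - T" using piece_fine[OF xR] T(1) by blast
      from x have "x \<in> E n" by auto
      then obtain P where P: "P \<in> piece n ` R" "P \<inter> ?D \<noteq> {}" "x \<in> P" unfolding E_def by auto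
      then have "P = piece n x" using piece_unique[OF P(1) P(3)] by simp
      then show False using P(2) n T(2) by blast
    qed
  qed
  have "(\<lambda>n. emeasure \<nu> (E n)) \<longlonglongrightarrow> emeasure \<nu> (\<Inter>n. E n)"
    using SE decE finE by (intro Lim_emeasure_decseq) auto
  moreover have "emeasure \<nu> (\<Inter>n. E n) = 0"
  proof -
    have "closedin STop ?D" by (rule closedin_frontier_of)
    then obtain T where T: "closed T" "?D = Sset \<inter> T" unfolding STop_def closedin_closed
      by blast
    then have "?D \<in> sets \<nu>" using closed_sets_nu by simp
    then have "emeasure \<nu> (\<Inter>n. E n) \<le> emeasure \<nu> ?D" by (rule emeasure_mono[OF IE])
    then show ?thesis using D0 by simp
  qed
  ultimately have Elim: "(\<lambda>n. emeasure \<nu> (E n)) \<longlonglongrightarrow> 0" by simp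
  have mE: "emeasure \<nu> (E n) = ennreal (measure \<nu> (E n))" for n
    using finE by (simp add: emeasure_eq_ennreal_measure)
  have SA: "A n \<in> sets \<nu>" "B n \<in> sets \<nu>" for n using KA KB unfolding Kc_def by auto
  have BR: "B n \<subseteq> R" for n unfolding B_def using pieces_R by blast
  have fmB: "B n \<in> fmeasurable \<nu>" for n using SA fin_R[OF _ BR] by (auto simp: fmeasurable_def)
  have fmE: "E n \<in> fmeasurable \<nu>" for n using SE finE by (auto simp: fmeasurable_def less_top)
  have ineq: "measure \<nu> (A n) \<le> measure \<nu> C" "measure \<nu> C \<le> measure \<nu> (B n)"
      "measure \<nu> (B n) - measure \<nu> (A n) \<le> measure \<nu> (E n)" for n
  proof -
    have fmC: "C \<in> fmeasurable \<nu>" using C fin_R by (auto simp: fmeasurable_def)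
    show "measure \<nu> (A n) \<le> measure \<nu> C" using AC SA fmC by (intro measure_mono_fmeasurable) auto
    show "measure \<nu> C \<le> measure \<nu> (B n)" using CB SA fmB C by (intro measure_mono_fmeasurable) auto
    have "measure \<nu> (B n - A n) = measure \<nu> (B n) - measure \<nu> (A n)"
    proof (rule measure_Diff)
      show "emeasure \<nu> (B n) \<noteq> \<infinity>" using fmB[of n] by (simp add: fmeasurable_def less_top)
      show "A n \<subseteq> B n" using AC[of n] CB[of n] by (rule order_trans)
    qed (use SA in auto)
    moreover have "measure \<nu> (B n - A n) \<le> measure \<nu> (E n)"
      using BAE SA fmE by (intro measure_mono_fmeasurable) auto
    ultimately show "measure \<nu> (B n) - measure \<nu> (A n) \<le> measure \<nu> (E n)" by simp
  qed
  have CS: "C \<in> sets borel" using C sets_nu by auto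
  have BS: "B n \<in> sets borel" for n using SA sets_nu by auto
  show ?thesis
  proof (rule tendstoI)
    fix e :: real assume e: "0 < e"
    have e2: "0 < e / 2" using e by simp
    have "0 < ennreal (e / 2)" using e2 by simp
    then have "\<forall>\<^sub>F n in sequentially. emeasure \<nu> (E n) < ennreal (e / 2)"
      using Elim by (rule order_tendstoD(2)[rotated])
    then obtain n where "emeasure \<nu> (E n) < ennreal (e / 2)" by (auto simp: eventually_sequentially)
    then have "ennreal (measure \<nu> (E n)) < ennreal (e / 2)" using mE[of n] by simp
    then have En: "measure \<nu> (E n) < e / 2" by (simp add: ennreal_less_iff[OF measure_nonneg])
    have tA: "((\<lambda>t. r t (A n)) \<longlongrightarrow> measure \<nu> (A n)) at_top" using KA[of n] unfolding Kc_def by blast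
    have tB: "((\<lambda>t. r t (B n)) \<longlongrightarrow> measure \<nu> (B n)) at_top" using KB[of n] unfolding Kc_def by blast
    have ev1: "\<forall>\<^sub>F t in at_top. dist (r t (A n)) (measure \<nu> (A n)) < e / 2"
      by (rule tendstoD[OF tA e2])
    have ev2: "\<forall>\<^sub>F t in at_top. dist (r t (B n)) (measure \<nu> (B n)) < e / 2"
      by (rule tendstoD[OF tB e2])
    have ev3: "\<forall>\<^sub>F t in at_top. (0::real) < t" by (rule eventually_gt_at_top)
    have i1: "measure \<nu> (A n) \<le> measure \<nu> C" and i2: "measure \<nu> C \<le> measure \<nu> (B n)"
      and i3: "measure \<nu> (B n) - measure \<nu> (A n) \<le> measure \<nu> (E n)" using ineq[of n] by auto
    from ev1 ev2 ev3 show "\<forall>\<^sub>F t in at_top. dist (r t C) (measure \<nu> C) < e"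
    proof eventually_elim
      case (elim t)
      have a1: "r t (A n) \<le> r t C" using r_mono[OF elim(3) CS AC] .
      have a2: "r t C \<le> r t (B n)" using r_mono[OF elim(3) BS CB] .
      have a3: "\<bar>r t (A n) - measure \<nu> (A n)\<bar> < e / 2" using elim(1) by (simp add: dist_real_def)
      have a4: "\<bar>r t (B n) - measure \<nu> (B n)\<bar> < e / 2" using elim(2) by (simp add: dist_real_def)
      have a3': "- (r t (A n) - measure \<nu> (A n)) < e / 2" using a3 unfolding abs_less_iff by blast
      have a4': "r t (B n) - measure \<nu> (B n) < e / 2" using a4 unfolding abs_less_iff by blast
      have "measure \<nu> C - e < r t C" using a1 a3' i1 i2 i3 En by linarith
      moreover have "r t C < measure \<nu> C + e" using a2 a4' i1 i2 i3 En by linarith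
      ultimately have "\<bar>r t C - measure \<nu> C\<bar> < e" unfolding abs_less_iff by linarith
      then show ?case by (simp add: dist_real_def)
    qed
  qed
qed

end


context L53 begin

lemma bad_y_countable: "countable {b. 0 < b \<and> emeasure \<nu> (Ly b) \<noteq> 0}"
proof -
  define F where "F j b = (if 1 / Suc j \<le> b then Ly b else {})" for j :: nat and b :: real
  have cj: "countable {b. emeasure \<nu> (F j b) \<noteq> 0}" for j
  proof (rule count_pos)
    let ?W = "Sset \<inter> (UNIV \<times> {ereal (1 / Suc j)..})"
    have Ws: "?W \<in> sets \<nu>" by (intro closed_sets_nu closed_Times) auto
    then show "?W \<in> sets \<nu>" .
    show "emeasure \<nu> ?W < \<infinity>" by (rule fin[OF Ws]) auto
    show "F j b \<in> sets \<nu>" for b unfolding F_def using Ly_sets by auto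
    show "F j b \<subseteq> ?W" for b unfolding F_def Ly_def by auto
    show "disjoint_family (F j)" unfolding disjoint_family_on_def F_def Ly_def by auto
  qed
  have "{b. 0 < b \<and> emeasure \<nu> (Ly b) \<noteq> 0} \<subseteq> (\<Union>j. {b. emeasure \<nu> (F j b) \<noteq> 0})"
  proof
    fix b assume b: "b \<in> {b. 0 < b \<and> emeasure \<nu> (Ly b) \<noteq> 0}"
    then obtain j where "inverse (real (Suc j)) < b" using reals_Archimedean by auto
    then have "1 / Suc j \<le> b" by (simp add: field_simps)
    then show "b \<in> (\<Union>j. {b. emeasure \<nu> (F j b) \<noteq> 0})" using b unfolding F_def by auto
  qed
  moreover have "countable (\<Union>j. {b. emeasure \<nu> (F j b) \<noteq> 0})" using cj by auto
  ultimately show ?thesis using countable_subset by blast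
qed

lemma bad_x_countable: assumes "0 < \<beta>" shows "countable {a. emeasure \<nu> (Lx \<beta> a) \<noteq> 0}"
proof (rule count_pos)
  let ?W = "Sset \<inter> (UNIV \<times> {ereal \<beta>..})"
  have Ws: "?W \<in> sets \<nu>" by (intro closed_sets_nu closed_Times) auto
  then show "?W \<in> sets \<nu>" .
  show "emeasure \<nu> ?W < \<infinity>" by (rule fin[OF Ws]) (use assms in auto)
  show "Lx \<beta> a \<in> sets \<nu>" for a by (rule Lx_sets)
  show "Lx \<beta> a \<subseteq> ?W" for a unfolding Lx_def by auto
  show "disjoint_family (Lx \<beta>)" unfolding disjoint_family_on_def Lx_def by auto
qed

lemma main:
  assumes C: "C \<subseteq> Sset" "C \<in> sets \<nu>" "compactin STop (STop closure_of C)"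
    and D0: "emeasure \<nu> (STop frontier_of C) = 0"
  shows "((\<lambda>t. ennreal (r t C)) \<longlongrightarrow> emeasure \<nu> C) at_top"
proof (cases "C = {}")
  case True
  have "r t {} = 0" for t unfolding r_def pre_def by simp
  then show ?thesis using True by simp
next
  case False
  let ?K = "STop closure_of C"
  have topS: "topspace STop = Sset" unfolding STop_def by simp
  have CK: "C \<subseteq> ?K" using C(1) topS by (simp add: closure_of_subset)
  have KS: "?K \<subseteq> Sset" using closure_of_subset_topspace[of STop C] topS by simp
  have cK: "compact ?K" using C(3) unfolding STop_def by (simp add: compactin_subtopology)
  have "compact (snd ` ?K)" using cK by (intro compact_continuous_image continuous_intros)
  moreover have "snd ` ?K \<noteq> {}" using CK False by auto
  ultimately have "\<exists>y0\<in>snd ` ?K. \<forall>y\<in>snd ` ?K. y0 \<le> y" by (rule compact_attains_inf)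
  then obtain y0 where y0: "y0 \<in> snd ` ?K" "\<And>y. y \<in> snd ` ?K \<Longrightarrow> y0 \<le> y" by blast
  have "0 < y0" using y0(1) KS unfolding Sset_def by auto
  then obtain m where m: "0 < ereal m" "ereal m < y0" using ereal_dense2 by blast
  have m0: "0 < m" using m(1) by simp
  obtain \<beta> where \<beta>: "0 < \<beta>" "\<beta> < m" "\<beta> \<notin> {b. 0 < b \<and> emeasure \<nu> (Ly b) \<noteq> 0}"
    using exists_avoid[OF bad_y_countable m0] by blast
  have gb: "goody \<beta>" using \<beta> unfolding goody_def by auto
  define g where "g = (SOME g::nat\<Rightarrow>real. (\<forall>k. 0 < g k \<and> g k \<notin> {a. emeasure \<nu> (Lx \<beta> a) \<noteq> 0}) \<and>
    (\<forall>u v. 0 \<le> u \<longrightarrow> u < v \<longrightarrow> (\<exists>k. u < g k \<and> g k < v)))"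
  have gg: "(\<forall>k. 0 < g k \<and> g k \<notin> {a. emeasure \<nu> (Lx \<beta> a) \<noteq> 0}) \<and>
    (\<forall>u v. 0 \<le> u \<longrightarrow> u < v \<longrightarrow> (\<exists>k. u < g k \<and> g k < v))"
    unfolding g_def by (rule someI_ex[OF dense_seq[OF bad_x_countable[OF \<beta>(1)]]])
  note g = gg[THEN conjunct1] gg[THEN conjunct2]
  define h where "h = (SOME h::nat\<Rightarrow>real. (\<forall>k. \<beta> < h k \<and> h k \<notin> {b. 0 < b \<and> emeasure \<nu> (Ly b) \<noteq> 0}) \<and>
    (\<forall>u v. \<beta> \<le> u \<longrightarrow> u < v \<longrightarrow> (\<exists>k. u < h k \<and> h k < v)))"
  have hh: "(\<forall>k. \<beta> < h k \<and> h k \<notin> {b. 0 < b \<and> emeasure \<nu> (Ly b) \<noteq> 0}) \<and>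
    (\<forall>u v. \<beta> \<le> u \<longrightarrow> u < v \<longrightarrow> (\<exists>k. u < h k \<and> h k < v))"
    unfolding h_def by (rule someI_ex[OF dense_seq[OF bad_y_countable]])
  note h = hh[THEN conjunct1] hh[THEN conjunct2]
  interpret G: L53g M Z1 Z2 \<nu> \<beta> g h
  proof
    show "0 < \<beta>" by (rule \<beta>(1))
    show "goody \<beta>" by (rule gb)
    show "goodx \<beta> (g k)" for k using g(1)[rule_format, of k] unfolding goodx_def by simp
    show "\<forall>u v. 0 \<le> u \<longrightarrow> u < v \<longrightarrow> (\<exists>k. u < g k \<and> g k < v)" by (rule g(2))
    show "goody (h k) \<and> \<beta> < h k" for k
    proof -
      have "\<beta> < h k" "h k \<notin> {b. 0 < b \<and> emeasure \<nu> (Ly b) \<noteq> 0}" using h(1) by auto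
      moreover have "0 < h k" using \<beta>(1) \<open>\<beta> < h k\<close> by linarith
      ultimately show ?thesis unfolding goody_def by simp
    qed
    show "\<forall>u v. \<beta> \<le> u \<longrightarrow> u < v \<longrightarrow> (\<exists>k. u < h k \<and> h k < v)" by (rule h(2))
  qed
  have KR: "?K \<subseteq> G.R"
  proof
    fix q assume q: "q \<in> ?K"
    then have "y0 \<le> snd q" using y0(2) by auto
    moreover have "ereal \<beta> < ereal m" using \<beta>(2) by simp
    ultimately have "ereal \<beta> < snd q" using m(2) by (meson less_le_trans less_trans)
    then show "q \<in> G.R" using q KS unfolding G.R_def by auto
  qed
  have CR: "C \<subseteq> G.R" using CK KR by auto
  have DR: "STop frontier_of C \<subseteq> G.R" using KR unfolding frontier_of_def by auto
  have lim: "((\<lambda>t. r t C) \<longlongrightarrow> measure \<nu> C) at_top" by (rule G.main_g[OF C(2) CR DR D0])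
  have "emeasure \<nu> C < \<infinity>" by (rule G.fin_R[OF C(2) CR])
  then have "emeasure \<nu> C = ennreal (measure \<nu> C)" by (simp add: emeasure_eq_ennreal_measure)
  then show ?thesis using tendsto_ennrealI[OF lim] by simp
qed

end

theorem lemma5p3:
  fixes M :: "'a measure" and Z1 Z2 :: "real \<Rightarrow> 'a \<Rightarrow> real"
    and \<nu> :: "(ereal \<times> ereal) measure" and f :: "real \<Rightarrow> real"
  assumes "prob_space M"
    and "\<And>t. t > 0 \<Longrightarrow> Z1 t \<in> borel_measurable M"
    and "\<And>t. t > 0 \<Longrightarrow> Z2 t \<in> borel_measurable M"
    and "\<And>t \<omega>. t > 0 \<Longrightarrow> \<omega> \<in> space M \<Longrightarrow> Z1 t \<omega> \<ge> 0"
    and "\<And>t \<omega>. t > 0 \<Longrightarrow> \<omega> \<in> space M \<Longrightarrow> Z2 t \<omega> \<ge> 0"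
    and "radon_on_S \<nu>"
    and A: "\<And>t1 t2 z. 0 \<le> t1 \<Longrightarrow> t1 \<le> t2 \<Longrightarrow> z > 0 \<Longrightarrow>
            emeasure \<nu> (STop frontier_of (Vset t1 t2 z)) = 0 \<Longrightarrow>
            ((\<lambda>t. ennreal (t * measure M {\<omega> \<in> space M.
                 (ereal (Z1 t \<omega>), ereal (Z2 t \<omega>)) \<in> Vset t1 t2 z}))
              \<longlongrightarrow> emeasure \<nu> (Vset t1 t2 z)) at_top"
    and B: "\<And>z0. z0 > 0 \<Longrightarrow>
            ((\<lambda>t. t * measure M {\<omega> \<in> space M.
                 (ereal (Z1 t \<omega>), ereal (Z2 t \<omega>)) \<in> Vset 0 \<infinity> z0})
              \<longlongrightarrow> f z0) at_top \<and> f z0 > 0"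
  shows "vague_tendsto
           (\<lambda>t C. ennreal (t * measure M {\<omega> \<in> space M. (ereal (Z1 t \<omega>), ereal (Z2 t \<omega>)) \<in> C}))
           \<nu>"
proof -
  interpret L: L53 M Z1 Z2 \<nu>
  proof (rule L53.intro)
    show "prob_space M" by (rule assms(1))
    show "L53_axioms M Z1 Z2 \<nu>" unfolding L53_axioms_def using assms(2,3,6) A by blast
  qed
  show ?thesis unfolding vague_tendsto_def
  proof (intro allI impI)
    fix C assume H: "C \<subseteq> Sset \<and> C \<in> sets \<nu> \<and> compactin STop (STop closure_of C) \<and>
          emeasure \<nu> (STop frontier_of C) = 0"
    have "((\<lambda>t. ennreal (L.r t C)) \<longlongrightarrow> emeasure \<nu> C) at_top" using H by (intro L.main) auto
    then show "((\<lambda>t. ennreal (t * measure M {\<omega> \<in> space M. (ereal (Z1 t \<omega>), ereal (Z2 t \<omega>)) \<in> C}))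
          \<longlongrightarrow> emeasure \<nu> C) at_top" unfolding L.r_def L.pre_def .
  qed
qed


end
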